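(* Let $A$ be a Heyting algebra, and let $\mathcal{L}=(Expr_{\mathcal{L}},Th_{\mathcal{L}},\mathcal{C})$ with $Expr_{\mathcal{L}}=A$, $Th_{\mathcal{L}}$ the set of proper filters of $A$, and $\mathcal{C}=\{\wedge,\vee,\to,\bot,\top\}$ the Heyting operations of $A$. Then $\mathcal{L}$ is an intuitionistic abstract logic.
   Context: An abstract logic is a triple $\mathcal{L}=(Expr_{\mathcal{L}},Th_{\mathcal{L}},\mathcal{C}_{\mathcal{L}})$ where $Expr_{\mathcal{L}}$ is a set, $Th_{\mathcal{L}}$ a non-empty set of subsets of $Expr_{\mathcal{L}}$ (theories) closed under intersections of non-empty subfamilies, and $\mathcal{C}_{\mathcal{L}}$ a set of operations on $Expr_{\mathcal{L}}$. $\mathcal{L}$ is closed under union of chains if the union of every non-empty chain of theories is a theory. A theory $T$ is totally prime if $T=\bigcap\mathcal{T}$ for a non-empty $\mathcal{T}\subseteq Th_{\mathcal{L}}$ (any size) implies $T\in\mathcal{T}$; $TPTh_{\mathcal{L}}$ is the set of these. An intuitionistic abstract logic is one closed under union of chains with binary connectives $\vee,\wedge,\to$ and constants $\top,\bot$ such that for all $a,b$ and all $T\in TPTh_{\mathcal{L}}$: $a\vee b\in T$ iff $a\in T$ or $b\in T$; $a\wedge b\in T$ iff $a,b\in T$; $a\to b\in T$ iff for every totally prime $T'\supseteq T$, $a\in T'$ implies $b\in T'$; $\top$ lies in every theory and $\bot$ in none. *)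

theory Defs
  imports Main
begin

class heyting_algebra = bounded_lattice +
  fixes himp :: "'a \<Rightarrow> 'a \<Rightarrow> 'a"
  assumes himp_residuation: "inf x a \<le> b \<longleftrightarrow> x \<le> himp a b"

definition lattice_filter :: "'a::bounded_lattice set \<Rightarrow> bool" where
  "lattice_filter F \<longleftrightarrow> top \<in> F
     \<and> (\<forall>x y. x \<in> F \<and> x \<le> y \<longrightarrow> y \<in> F)
     \<and> (\<forall>x y. x \<in> F \<and> y \<in> F \<longrightarrow> inf x y \<in> F)"

definition proper_filter :: "'a::bounded_lattice set \<Rightarrow> bool" where
  "proper_filter F \<longleftrightarrow> lattice_filter F \<and> F \<noteq> UNIV"

text \<open>The set of operations of the abstract logic is given by the concrete
  connectives; an abstract logic only requires they be operations on Expr.\<close>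

definition abstract_logic :: "'e set \<Rightarrow> 'e set set \<Rightarrow> bool" where
  "abstract_logic Expr Th \<longleftrightarrow> Th \<noteq> {} \<and> (\<forall>T\<in>Th. T \<subseteq> Expr)
     \<and> (\<forall>\<T>. \<T> \<noteq> {} \<and> \<T> \<subseteq> Th \<longrightarrow> \<Inter>\<T> \<in> Th)"

definition closed_under_union_of_chains :: "'e set set \<Rightarrow> bool" where
  "closed_under_union_of_chains Th \<longleftrightarrow>
     (\<forall>\<C>. \<C> \<noteq> {} \<and> \<C> \<subseteq> Th \<and> chain\<^sub>\<subseteq> \<C> \<longrightarrow> \<Union>\<C> \<in> Th)"

definition totally_prime :: "'e set set \<Rightarrow> 'e set \<Rightarrow> bool" where
  "totally_prime Th T \<longleftrightarrow> T \<in> Th \<and>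
     (\<forall>\<T>. \<T> \<noteq> {} \<and> \<T> \<subseteq> Th \<and> T = \<Inter>\<T> \<longrightarrow> T \<in> \<T>)"

definition TPTh :: "'e set set \<Rightarrow> 'e set set" where
  "TPTh Th = {T. totally_prime Th T}"

definition intuitionistic_abstract_logic ::
  "'e set \<Rightarrow> 'e set set \<Rightarrow> ('e \<Rightarrow> 'e \<Rightarrow> 'e) \<Rightarrow> ('e \<Rightarrow> 'e \<Rightarrow> 'e)
     \<Rightarrow> ('e \<Rightarrow> 'e \<Rightarrow> 'e) \<Rightarrow> 'e \<Rightarrow> 'e \<Rightarrow> bool" where
  "intuitionistic_abstract_logic Expr Th dsj cnj imp tp bt \<longleftrightarrow>
     abstract_logic Expr Th
     \<and> closed_under_union_of_chains Th
     \<and> (\<forall>a\<in>Expr. \<forall>b\<in>Expr. dsj a b \<in> Expr \<and> cnj a b \<in> Expr \<and> imp a b \<in> Expr)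
     \<and> tp \<in> Expr \<and> bt \<in> Expr
     \<and> (\<forall>a\<in>Expr. \<forall>b\<in>Expr. \<forall>T\<in>TPTh Th.
          (dsj a b \<in> T \<longleftrightarrow> a \<in> T \<or> b \<in> T)
        \<and> (cnj a b \<in> T \<longleftrightarrow> a \<in> T \<and> b \<in> T)
        \<and> (imp a b \<in> T \<longleftrightarrow> (\<forall>T'\<in>TPTh Th. T \<subseteq> T' \<longrightarrow> a \<in> T' \<longrightarrow> b \<in> T')))
     \<and> (\<forall>T\<in>Th. tp \<in> T \<and> bt \<notin> T)"

end

theory Submission
  imports Defs
begin

context heyting_algebra
begin

lemma h_mp: "inf a (himp a b) \<le> b"
proof -
  have "inf (himp a b) a \<le> b" using himp_residuation by blast
  thus ?thesis by (simp add: inf_commute)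
qed

lemma h_mono: "x \<le> y \<Longrightarrow> himp a x \<le> himp a y"
  using himp_residuation[of "himp a x" a y] h_mp[of a x]
  by (metis inf_commute order_trans)

lemma h_inf: "inf (himp a x) (himp a y) \<le> himp a (inf x y)"
proof -
  have "inf (inf (himp a x) (himp a y)) a \<le> x"
    by (metis h_mp inf_commute inf_le1 inf_mono order_refl order_trans)
  moreover have "inf (inf (himp a x) (himp a y)) a \<le> y"
    by (metis h_mp inf_commute inf_le2 inf_mono order_refl order_trans)
  ultimately have "inf (inf (himp a x) (himp a y)) a \<le> inf x y" by simp
  thus ?thesis using himp_residuation by blast
qed

lemma h_le: "t \<le> himp a t"
  using himp_residuation[of t a t] by simp

lemma h_refl: "himp a a = top"
  using himp_residuation[of top a a] by (simp add: top_unique)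

lemma h_sup: "inf (himp a x) (himp b x) \<le> himp (sup a b) x"
proof -
  let ?y = "inf (himp a x) (himp b x)"
  have "inf a ?y \<le> x" by (metis h_mp inf_le1 inf_mono order_refl order_trans)
  hence 1: "a \<le> himp ?y x" using himp_residuation by blast
  have "inf b ?y \<le> x" by (metis h_mp inf_le2 inf_mono order_refl order_trans)
  hence 2: "b \<le> himp ?y x" using himp_residuation by blast
  from 1 2 have "sup a b \<le> himp ?y x" by simp
  hence "inf (sup a b) ?y \<le> x" using himp_residuation by blast
  hence "inf ?y (sup a b) \<le> x" by (simp add: inf_commute)
  thus ?thesis using himp_residuation by blast
qed

end

lemma pf_iff: "proper_filter (F::'a::bounded_lattice set) \<longleftrightarrow> lattice_filter F \<and> bot \<notin> F"
  unfolding proper_filter_def lattice_filter_def by (auto intro: bot_least)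

lemma filt_top: "lattice_filter F \<Longrightarrow> top \<in> F"
  unfolding lattice_filter_def by auto
lemma filt_up: "lattice_filter F \<Longrightarrow> x \<in> F \<Longrightarrow> x \<le> y \<Longrightarrow> y \<in> F"
  unfolding lattice_filter_def by auto
lemma filt_inf: "lattice_filter F \<Longrightarrow> x \<in> F \<Longrightarrow> y \<in> F \<Longrightarrow> inf x y \<in> F"
  unfolding lattice_filter_def by auto

lemma rel_filter:
  fixes F :: "'a::heyting_algebra set"
  assumes "lattice_filter F"
  shows "lattice_filter {x. himp a x \<in> F}" "F \<subseteq> {x. himp a x \<in> F}" "a \<in> {x. himp a x \<in> F}"
proof -
  show "lattice_filter {x. himp a x \<in> F}"
    unfolding lattice_filter_def
  proof (intro conjI allI impI)
    show "top \<in> {x. himp a x \<in> F}"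
      using filt_top[OF assms] h_le[of top a] by (simp add: top_unique)
    fix x y
    show "x \<in> {x. himp a x \<in> F} \<and> x \<le> y \<Longrightarrow> y \<in> {x. himp a x \<in> F}"
      using filt_up[OF assms] h_mono by blast
    show "x \<in> {x. himp a x \<in> F} \<and> y \<in> {x. himp a x \<in> F} \<Longrightarrow> inf x y \<in> {x. himp a x \<in> F}"
      using filt_up[OF assms] filt_inf[OF assms] h_inf by blast
  qed
  show "F \<subseteq> {x. himp a x \<in> F}" using filt_up[OF assms] h_le by blast
  show "a \<in> {x. himp a x \<in> F}" using filt_top[OF assms] by (simp add: h_refl)
qed

lemma tp_meet2:
  fixes T :: "'a::heyting_algebra set"
  assumes tp: "totally_prime {F. proper_filter F} T"
    and f1: "lattice_filter S1" and f2: "lattice_filter S2" and eq: "T = S1 \<inter> S2"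
  shows "T = S1 \<or> T = S2"
proof -
  have pT: "proper_filter T" using tp unfolding totally_prime_def by auto
  define \<T> where "\<T> = {S1, S2} - {UNIV}"
  have ne: "\<T> \<noteq> {}"
  proof
    assume "\<T> = {}"
    hence "S1 = UNIV" "S2 = UNIV" unfolding \<T>_def by auto
    thus False using pT eq unfolding proper_filter_def by auto
  qed
  have sub: "\<T> \<subseteq> {F. proper_filter F}"
    unfolding \<T>_def proper_filter_def using f1 f2 by auto
  have "\<Inter>\<T> = S1 \<inter> S2" unfolding \<T>_def by auto
  hence eq': "T = \<Inter>\<T>" using eq by simp
  from tp have "\<forall>\<T>. \<T> \<noteq> {} \<and> \<T> \<subseteq> {F. proper_filter F} \<and> T = \<Inter>\<T> \<longrightarrow> T \<in> \<T>"
    unfolding totally_prime_def by blast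
  hence "T \<in> \<T>" using ne sub eq' by blast
  thus ?thesis unfolding \<T>_def by auto
qed

lemma chain_union_filter:
  fixes \<C> :: "'a::bounded_lattice set set"
  assumes ne: "\<C> \<noteq> {}" and ch: "\<forall>X\<in>\<C>. \<forall>Y\<in>\<C>. X \<subseteq> Y \<or> Y \<subseteq> X"
    and f: "\<forall>X\<in>\<C>. lattice_filter X"
  shows "lattice_filter (\<Union>\<C>)"
  unfolding lattice_filter_def
proof (intro conjI allI impI)
  show "top \<in> \<Union>\<C>" using ne f filt_top by blast
  fix x y
  show "x \<in> \<Union>\<C> \<and> x \<le> y \<Longrightarrow> y \<in> \<Union>\<C>" using f filt_up by blast
  assume "x \<in> \<Union>\<C> \<and> y \<in> \<Union>\<C>"
  then obtain X Y where "X \<in> \<C>" "Y \<in> \<C>" "x \<in> X" "y \<in> Y" by auto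
  thus "inf x y \<in> \<Union>\<C>" using ch f filt_inf by (metis UnionI subsetD)
qed

lemma max_filter:
  fixes G :: "'a::heyting_algebra set"
  assumes G: "lattice_filter G" and b: "b \<notin> G"
  shows "\<exists>M. totally_prime {F. proper_filter F} M \<and> G \<subseteq> M \<and> b \<notin> M"
proof -
  define A where "A = {F. lattice_filter F \<and> G \<subseteq> F \<and> b \<notin> F}"
  have "\<exists>M\<in>A. \<forall>X\<in>A. M \<subseteq> X \<longrightarrow> X = M"
  proof (rule subset_Zorn_nonempty)
    show "A \<noteq> {}" using G b unfolding A_def by auto
    fix \<C> assume ne: "\<C> \<noteq> {}" and ch: "subset.chain A \<C>"
    hence c1: "\<C> \<subseteq> A" and c2: "\<forall>X\<in>\<C>. \<forall>Y\<in>\<C>. X \<subseteq> Y \<or> Y \<subseteq> X"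
      unfolding subset_chain_def by auto
    have "lattice_filter (\<Union>\<C>)" using chain_union_filter[OF ne c2] c1 unfolding A_def by auto
    moreover have "G \<subseteq> \<Union>\<C>" using ne c1 unfolding A_def by auto
    moreover have "b \<notin> \<Union>\<C>" using c1 unfolding A_def by auto
    ultimately show "\<Union>\<C> \<in> A" unfolding A_def by auto
  qed
  then obtain M where M: "M \<in> A" and mx: "\<forall>X\<in>A. M \<subseteq> X \<longrightarrow> X = M" by blast
  have pM: "proper_filter M" using M unfolding A_def proper_filter_def by auto
  have "totally_prime {F. proper_filter F} M"
    unfolding totally_prime_def
  proof (intro conjI allI impI)
    show "M \<in> {F. proper_filter F}" using pM by simp
    fix \<T> assume h: "\<T> \<noteq> {} \<and> \<T> \<subseteq> {F. proper_filter F} \<and> M = \<Inter>\<T>"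
    show "M \<in> \<T>"
    proof (rule ccontr)
      assume nM: "M \<notin> \<T>"
      have "\<forall>X\<in>\<T>. b \<in> X"
      proof
        fix X assume X: "X \<in> \<T>"
        have "M \<subseteq> X" using h X by auto
        moreover have "lattice_filter X" using h X unfolding proper_filter_def by auto
        moreover have "X \<noteq> M" using X nM by auto
        ultimately show "b \<in> X" using mx M unfolding A_def by auto
      qed
      hence "b \<in> M" using h by auto
      thus False using M unfolding A_def by auto
    qed
  qed
  thus ?thesis using M unfolding A_def by auto
qed

theorem lemma4p4:
  assumes "(bot::'a::heyting_algebra) \<noteq> top"
  shows "intuitionistic_abstract_logic (UNIV::'a set) {F. proper_filter F}
           sup inf himp top bot"
  unfolding intuitionistic_abstract_logic_def
proof (intro conjI)
  show "abstract_logic (UNIV::'a set) {F. proper_filter F}"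
    unfolding abstract_logic_def
  proof (intro conjI allI impI ballI)
    have "proper_filter {top::'a}"
      unfolding pf_iff lattice_filter_def using assms by (auto simp: top_unique)
    thus "{F::'a set. proper_filter F} \<noteq> {}" by auto
    show "\<And>T. T \<in> {F::'a set. proper_filter F} \<Longrightarrow> T \<subseteq> UNIV" by simp
    fix \<T> :: "'a set set" assume h: "\<T> \<noteq> {} \<and> \<T> \<subseteq> {F. proper_filter F}"
    hence "\<forall>X\<in>\<T>. lattice_filter X \<and> bot \<notin> X" unfolding pf_iff by auto
    hence "lattice_filter (\<Inter>\<T>) \<and> bot \<notin> \<Inter>\<T>" using h
      unfolding lattice_filter_def by blast
    thus "\<Inter>\<T> \<in> {F. proper_filter F}" unfolding pf_iff by simp
  qed
  show "closed_under_union_of_chains {F::'a set. proper_filter F}"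
    unfolding closed_under_union_of_chains_def
  proof (intro allI impI)
    fix \<C> :: "'a set set" assume h: "\<C> \<noteq> {} \<and> \<C> \<subseteq> {F. proper_filter F} \<and> chain\<^sub>\<subseteq> \<C>"
    hence "lattice_filter (\<Union>\<C>)"
      using chain_union_filter[of \<C>] unfolding chain_subset_def pf_iff by auto
    moreover have "bot \<notin> \<Union>\<C>" using h unfolding pf_iff by auto
    ultimately show "\<Union>\<C> \<in> {F. proper_filter F}" unfolding pf_iff by simp
  qed
  show "(bot::'a) \<in> UNIV" by auto
  show "(top::'a) \<in> UNIV" by auto
  show "\<forall>a\<in>UNIV. \<forall>b\<in>UNIV. sup a b \<in> (UNIV::'a set) \<and> inf a b \<in> UNIV \<and> himp a b \<in> UNIV" by auto
  show "\<forall>T\<in>{F::'a set. proper_filter F}. top \<in> T \<and> bot \<notin> T"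
    unfolding pf_iff lattice_filter_def by auto
  show "\<forall>a\<in>UNIV. \<forall>b\<in>UNIV. \<forall>T\<in>TPTh {F::'a set. proper_filter F}.
          (sup a b \<in> T \<longleftrightarrow> a \<in> T \<or> b \<in> T)
        \<and> (inf a b \<in> T \<longleftrightarrow> a \<in> T \<and> b \<in> T)
        \<and> (himp a b \<in> T \<longleftrightarrow> (\<forall>T'\<in>TPTh {F. proper_filter F}. T \<subseteq> T' \<longrightarrow> a \<in> T' \<longrightarrow> b \<in> T'))"
  proof (intro ballI conjI)
  fix a b :: 'a and T :: "'a set" assume "T \<in> TPTh {F. proper_filter F}"
  hence tp: "totally_prime {F. proper_filter F} T" unfolding TPTh_def by simp
  hence fT: "lattice_filter T" unfolding totally_prime_def pf_iff by auto
  show "(sup a b \<in> T) = (a \<in> T \<or> b \<in> T)"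
  proof
    assume ab: "sup a b \<in> T"
    let ?Sa = "{x. himp a x \<in> T}" and ?Sb = "{x. himp b x \<in> T}"
    have "T = ?Sa \<inter> ?Sb"
    proof
      show "T \<subseteq> ?Sa \<inter> ?Sb" using rel_filter[OF fT] by blast
      show "?Sa \<inter> ?Sb \<subseteq> T"
      proof
        fix x assume "x \<in> ?Sa \<inter> ?Sb"
        hence "himp (sup a b) x \<in> T" using filt_inf[OF fT] filt_up[OF fT] h_sup by blast
        hence "inf (sup a b) (himp (sup a b) x) \<in> T" using filt_inf[OF fT] ab by blast
        thus "x \<in> T" using filt_up[OF fT] h_mp by blast
      qed
    qed
    hence "T = ?Sa \<or> T = ?Sb" using tp_meet2[OF tp] rel_filter[OF fT] by blast
    thus "a \<in> T \<or> b \<in> T" using rel_filter(3)[OF fT] by blast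
  next
    assume "a \<in> T \<or> b \<in> T"
    thus "sup a b \<in> T" using filt_up[OF fT] by (meson sup_ge1 sup_ge2)
  qed
  show "(inf a b \<in> T) = (a \<in> T \<and> b \<in> T)"
    using filt_inf[OF fT] filt_up[OF fT] by (meson inf_le1 inf_le2)
  show "(himp a b \<in> T) = (\<forall>T'\<in>TPTh {F. proper_filter F}. T \<subseteq> T' \<longrightarrow> a \<in> T' \<longrightarrow> b \<in> T')"
  proof
    assume h: "himp a b \<in> T"
    show "\<forall>T'\<in>TPTh {F. proper_filter F}. T \<subseteq> T' \<longrightarrow> a \<in> T' \<longrightarrow> b \<in> T'"
    proof (intro ballI impI)
      fix T' assume "T' \<in> TPTh {F. proper_filter F}" "T \<subseteq> T'" "a \<in> T'"
      moreover hence "lattice_filter T'" unfolding TPTh_def totally_prime_def pf_iff by auto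
      ultimately show "b \<in> T'" using h filt_inf filt_up h_mp by blast
    qed
  next
    assume h: "\<forall>T'\<in>TPTh {F. proper_filter F}. T \<subseteq> T' \<longrightarrow> a \<in> T' \<longrightarrow> b \<in> T'"
    show "himp a b \<in> T"
    proof (rule ccontr)
      assume "himp a b \<notin> T"
      hence "b \<notin> {x. himp a x \<in> T}" by simp
      then obtain M where M: "totally_prime {F. proper_filter F} M"
          "{x. himp a x \<in> T} \<subseteq> M" "b \<notin> M"
        using max_filter[OF rel_filter(1)[OF fT]] by blast
      have "T \<subseteq> M" "a \<in> M" using M(2) rel_filter(2,3)[OF fT] by blast+
      thus False using h M unfolding TPTh_def by auto
    qed
  qed
  qed
qed

end
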